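(* Let $a>1$, $C_j(n,a)=\binom{n}{j}\left(\frac{1+a}{2}\right)^{n-j}\left(\frac{1-a}{2}\right)^j$, $b_j=-\frac{i}{\sqrt2}(1-\frac{2j}{n})$ and $b=-\frac{ia}{\sqrt2}$. Then for every $f$ in the Fock space $\mathtt{F}(\mathbb{C})$ and every $z\in\mathbb{C}$, $$\lim_{n\to\infty}\sum_{j=0}^nC_j(n,a)\mathcal{W}_{b_j}[f](z)=\mathcal{W}_b[f](z).$$
   Context: $\mathtt{F}(\mathbb{C})$ is the space of entire functions $f$ with $\frac1\pi\int_{\mathbb{C}}|f(z)|^2e^{-|z|^2}d\lambda(z)<\infty$. For $c\in\mathbb{C}$ the Weyl operator is $\mathcal{W}_cf(z)=f(z-c)e^{z\bar c-|c|^2/2}$. *)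

theory Defs
  imports "HOL-Analysis.Analysis"
begin

definition fock_space :: "(complex \<Rightarrow> complex) set" where
  "fock_space = {f. f holomorphic_on UNIV \<and>
     integrable lborel (\<lambda>z::complex. (1 / pi) * (cmod (f z))\<^sup>2 * exp (- (cmod z)\<^sup>2))}"

definition weyl_op :: "complex \<Rightarrow> (complex \<Rightarrow> complex) \<Rightarrow> complex \<Rightarrow> complex" where
  "weyl_op c f z = f (z - c) * exp (z * cnj c - of_real ((cmod c)\<^sup>2 / 2))"

definition Cj :: "nat \<Rightarrow> nat \<Rightarrow> real \<Rightarrow> real" where
  "Cj n j a = real (n choose j) * ((1 + a) / 2) ^ (n - j) * ((1 - a) / 2) ^ j"

end

theory Submission
  imports Defs "HOL-Complex_Analysis.Complex_Analysis"
begin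

lemma Cj_Suc_Suc:
  "Cj (Suc n) (Suc j) a = (1+a)/2 * Cj n (Suc j) a + (1-a)/2 * Cj n j a"
proof (cases "j < n")
  case True
  then have e: "Suc n - Suc j = Suc (n - Suc j)" "n - j = Suc (n - Suc j)" by auto
  show ?thesis unfolding Cj_def binomial_Suc_Suc e of_nat_add power_Suc
    by (simp only: distrib_right distrib_left mult_ac add_ac)
next
  case False
  then have z: "n choose Suc j = 0" by simp
  have e: "Suc n - Suc j = n - j" by simp
  show ?thesis unfolding Cj_def binomial_Suc_Suc e z
    by (simp add: mult_ac)
qed

lemma Cj_Suc_0: "Cj (Suc n) 0 a = (1+a)/2 * Cj n 0 a"
  unfolding Cj_def by simp

lemma Cj_over: "j > n \<Longrightarrow> Cj n j a = 0"
  unfolding Cj_def by simp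

lemma Cj_pascal_sum:
  fixes g :: "nat \<Rightarrow> real"
  shows "(\<Sum>j=0..Suc n. Cj (Suc n) j a * g j)
       = (1+a)/2 * (\<Sum>j=0..n. Cj n j a * g j) + (1-a)/2 * (\<Sum>j=0..n. Cj n j a * g (Suc j))"
proof -
  have "(\<Sum>j=0..Suc n. Cj (Suc n) j a * g j)
      = Cj (Suc n) 0 a * g 0 + (\<Sum>j=0..n. Cj (Suc n) (Suc j) a * g (Suc j))"
    by (subst sum.atLeast0_atMost_Suc_shift) simp
  also have "\<dots> = (1+a)/2 * (Cj n 0 a * g 0 + (\<Sum>j=0..n. Cj n (Suc j) a * g (Suc j)))
       + (1-a)/2 * (\<Sum>j=0..n. Cj n j a * g (Suc j))"
    by (simp add: Cj_Suc_Suc Cj_Suc_0 algebra_simps sum.distrib sum_distrib_left)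
  also have "Cj n 0 a * g 0 + (\<Sum>j=0..n. Cj n (Suc j) a * g (Suc j)) = (\<Sum>j=0..Suc n. Cj n j a * g j)"
    by (subst sum.atLeast0_atMost_Suc_shift) simp
  also have "\<dots> = (\<Sum>j=0..n. Cj n j a * g j)"
    by (simp add: Cj_over)
  finally show ?thesis .
qed

definition Amom :: "real \<Rightarrow> nat \<Rightarrow> nat \<Rightarrow> real" where
  "Amom a n k = (\<Sum>j=0..n. Cj n j a * (real n - 2 * real j) ^ k)"

definition ee :: "real \<Rightarrow> nat \<Rightarrow> real" where
  "ee a m = (1+a)/2 + (1-a)/2 * (-1) ^ m"

lemma Amom_Suc:
  "Amom a (Suc n) k = (\<Sum>i\<le>k. real (k choose i) * Amom a n i * ee a (k - i))"
proof -
  define y where "y j = real n - 2 * real j" for j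
  have b1: "(t + 1) ^ k = (\<Sum>i\<le>k. real (k choose i) * t ^ i)" for t :: real
    using binomial_ring[of t 1 k] by simp
  have b2: "(t + (-1)) ^ k = (\<Sum>i\<le>k. real (k choose i) * t ^ i * (-1) ^ (k - i))" for t :: real
    using binomial_ring[of t "-1" k] by simp
  define P where "P = (1+a)/2"
  define Q where "Q = (1-a)/2"
  define F where "F i j = P * (Cj n j a * (real (k choose i) * y j ^ i))
     + Q * (Cj n j a * (real (k choose i) * y j ^ i * (-1) ^ (k - i)))" for i j
  have "Amom a (Suc n) k = P * (\<Sum>j=0..n. Cj n j a * (y j + 1) ^ k)
        + Q * (\<Sum>j=0..n. Cj n j a * (y j + (-1)) ^ k)"
    unfolding Amom_def Cj_pascal_sum y_def P_def Q_def by (simp add: algebra_simps)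
  also have "\<dots> = P * (\<Sum>j=0..n. Cj n j a * (\<Sum>i\<le>k. real (k choose i) * y j ^ i))
        + Q * (\<Sum>j=0..n. Cj n j a * (\<Sum>i\<le>k. real (k choose i) * y j ^ i * (-1) ^ (k - i)))"
    by (simp only: b1 b2)
  also have "\<dots> = (\<Sum>j=0..n. \<Sum>i\<le>k. F i j)"
    unfolding F_def by (simp add: sum_distrib_left sum.distrib)
  also have "\<dots> = (\<Sum>i\<le>k. \<Sum>j=0..n. F i j)"
    by (rule sum.swap)
  also have "\<dots> = (\<Sum>i\<le>k. real (k choose i) * Amom a n i * ee a (k - i))"
  proof (rule sum.cong[OF refl])
    fix i assume "i \<in> {..k}"
    have "(\<Sum>j=0..n. F i j) = (\<Sum>j=0..n. Cj n j a * y j ^ i * (real (k choose i) * (P + Q * (-1) ^ (k - i))))"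
      unfolding F_def by (intro sum.cong refl) (simp add: algebra_simps)
    also have "\<dots> = real (k choose i) * Amom a n i * ee a (k - i)"
      unfolding Amom_def ee_def y_def P_def Q_def sum_distrib_right[symmetric] by simp
    finally show "(\<Sum>j=0..n. F i j) = real (k choose i) * Amom a n i * ee a (k - i)" .
  qed
  finally show ?thesis .
qed

lemma Amom_0: "Amom a 0 k = 0 ^ k"
  unfolding Amom_def Cj_def by simp

lemma Amom_k0: "Amom a n 0 = 1"
  by (induction n) (simp_all add: Amom_Suc Amom_0 ee_def field_simps)

lemma ee_0: "ee a 0 = 1" and ee_1: "ee a 1 = a"
  by (simp_all add: ee_def field_simps)

lemma ee_bound: assumes "a \<ge> 1" shows "\<bar>ee a m\<bar> \<le> a ^ m"
proof (cases "even m")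
  case True
  then show ?thesis using assms by (simp add: ee_def one_le_power field_simps)
next
  case False
  then have "m \<ge> 1" by presburger
  then have "a ^ 1 \<le> a ^ m" using assms by (intro power_increasing) auto
  then show ?thesis using False assms by (simp add: ee_def field_simps)
qed

lemma Amom_bound: assumes "a \<ge> 1" shows "\<bar>Amom a n k\<bar> \<le> (real n * a) ^ k"
proof (induction n arbitrary: k)
  case 0
  then show ?case by (simp add: Amom_0)
next
  case (Suc n)
  have "\<bar>Amom a (Suc n) k\<bar> \<le> (\<Sum>i\<le>k. \<bar>real (k choose i) * Amom a n i * ee a (k - i)\<bar>)"
    unfolding Amom_Suc by (rule sum_abs)
  also have "\<dots> \<le> (\<Sum>i\<le>k. real (k choose i) * (real n * a) ^ i * a ^ (k - i))"
    using Suc.IH ee_bound[OF assms] assms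
    by (intro sum_mono) (auto simp: abs_mult intro!: mult_left_mono mult_mono)
  also have "\<dots> = (real n * a + a) ^ k"
    by (simp add: binomial_ring)
  also have "\<dots> = (real (Suc n) * a) ^ k"
    by (simp add: algebra_simps)
  finally show ?case .
qed


definition Eerr :: "real \<Rightarrow> nat \<Rightarrow> nat \<Rightarrow> real" where
  "Eerr a n k = Amom a n k - (real n * a) ^ k"

definition Dd :: "real \<Rightarrow> nat \<Rightarrow> nat \<Rightarrow> real" where
  "Dd a n k = (\<Sum>i<k. real (k choose i) * (Amom a n i * ee a (k - i) - (real n * a) ^ i * a ^ (k - i)))"

lemma Eerr_Suc: "Eerr a (Suc n) k = Eerr a n k + Dd a n k"
proof -
  have s1: "Amom a (Suc n) k = (\<Sum>i<k. real (k choose i) * Amom a n i * ee a (k - i)) + Amom a n k"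
    unfolding Amom_Suc by (simp add: lessThan_Suc_atMost[symmetric] ee_0)
  have "(real (Suc n) * a) ^ k = (real n * a + a) ^ k" by (simp add: algebra_simps)
  also have "\<dots> = (\<Sum>i\<le>k. real (k choose i) * (real n * a) ^ i * a ^ (k - i))"
    by (rule binomial_ring)
  also have "\<dots> = (\<Sum>i<k. real (k choose i) * (real n * a) ^ i * a ^ (k - i)) + (real n * a) ^ k"
    by (simp add: lessThan_Suc_atMost[symmetric])
  finally have s2: "(real (Suc n) * a) ^ k = \<dots>" .
  show ?thesis unfolding Eerr_def Dd_def s1 s2
    by (simp add: sum_subtractf right_diff_distrib mult_ac)
qed

lemma Eerr_0: "Eerr a 0 k = 0"
  unfolding Eerr_def Amom_0 by simp

lemma Eerr_sum: "Eerr a n k = (\<Sum>l<n. Dd a l k)"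
  by (induction n) (simp_all add: Eerr_0 Eerr_Suc)

lemma Eerr_k0: "Eerr a n 0 = 0"
  unfolding Eerr_def Amom_k0 by simp

lemma Dd_k1: "Dd a n 1 = 0"
  unfolding Dd_def by (simp add: Amom_k0 ee_def field_simps)


lemma Dd_term_bound:
  assumes a: "a \<ge> 1" and k: "k \<ge> 2" and i: "i < k" and K: "K \<ge> 0"
    and EK: "\<And>n. \<bar>Eerr a n i\<bar> \<le> K * real (n+1) ^ (i - 1)"
  shows "\<bar>Amom a l i * ee a (k - i) - (real l * a) ^ i * a ^ (k - i)\<bar>
          \<le> (K + 2) * a ^ k * real (l+1) ^ (k - 2)"
proof -
  have a0: "a \<ge> 0" using a by simp
  have eq: "Amom a l i * ee a (k - i) - (real l * a) ^ i * a ^ (k - i)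
     = Eerr a l i * ee a (k - i) + (real l * a) ^ i * (ee a (k - i) - a ^ (k - i))"
    unfolding Eerr_def by (simp add: algebra_simps)
  have l1: "real (l+1) \<ge> 1" by simp
  have ak: "a ^ (k - i) \<le> a ^ k" using a by (intro power_increasing) auto
  have t1: "\<bar>Eerr a l i * ee a (k - i)\<bar> \<le> K * a ^ k * real (l+1) ^ (k - 2)"
  proof -
    have "\<bar>Eerr a l i * ee a (k - i)\<bar> \<le> (K * real (l+1) ^ (i - 1)) * a ^ (k - i)"
      unfolding abs_mult using EK[of l] ee_bound[OF a, of "k - i"]
      by (intro mult_mono) auto
    also have "\<dots> \<le> (K * real (l+1) ^ (k - 2)) * a ^ k"
      using K i l1 ak a0 a
      by (intro mult_mono mult_left_mono power_increasing) auto
    finally show ?thesis by (simp add: mult_ac)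
  qed
  have t2: "\<bar>(real l * a) ^ i * (ee a (k - i) - a ^ (k - i))\<bar> \<le> 2 * a ^ k * real (l+1) ^ (k - 2)"
  proof (cases "i = k - 1")
    case True
    then have "k - i = 1" using k by simp
    then show ?thesis using a0 by (simp add: ee_def field_simps)
  next
    case False
    then have ik: "i \<le> k - 2" using i by simp
    have "\<bar>(real l * a) ^ i * (ee a (k - i) - a ^ (k - i))\<bar>
        = real l ^ i * a ^ i * \<bar>ee a (k - i) - a ^ (k - i)\<bar>"
      using a0 by (simp add: abs_mult power_mult_distrib)
    also have "\<dots> \<le> real (l+1) ^ (k - 2) * a ^ i * (2 * a ^ (k - i))"
    proof (intro mult_mono)
      have "real l ^ i \<le> real (l+1) ^ i" by (intro power_mono) auto
      also have "\<dots> \<le> real (l+1) ^ (k - 2)" using ik l1 by (intro power_increasing) auto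
      finally show "real l ^ i \<le> real (l+1) ^ (k - 2)" .
      show "\<bar>ee a (k - i) - a ^ (k - i)\<bar> \<le> 2 * a ^ (k - i)"
        using ee_bound[OF a, of "k - i"] a0 by (simp add: abs_le_iff)
    qed (use a0 in auto)
    also have "\<dots> = 2 * (a ^ i * a ^ (k - i)) * real (l+1) ^ (k - 2)" by (simp add: mult_ac)
    also have "a ^ i * a ^ (k - i) = a ^ k" using i by (simp add: power_add[symmetric])
    finally show ?thesis .
  qed
  show ?thesis unfolding eq
    using abs_triangle_ineq[of "Eerr a l i * ee a (k - i)" "(real l * a) ^ i * (ee a (k - i) - a ^ (k - i))"] t1 t2
    by (simp add: algebra_simps)
qed


lemma Eerr_bound:
  assumes a: "a \<ge> 1"
  shows "\<exists>K\<ge>0. \<forall>n. \<bar>Eerr a n k\<bar> \<le> K * real (n+1) ^ (k - 1)"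
proof (induction k rule: less_induct)
  case (less k)
  show ?case
  proof (cases "k \<le> 1")
    case True
    then have "k = 0 \<or> k = 1" by auto
    then have "\<And>n. Eerr a n k = 0"
      using Eerr_k0 Eerr_sum Dd_k1 by auto
    then show ?thesis by (intro exI[of _ 0]) auto
  next
    case False
    then have k2: "k \<ge> 2" by simp
    have "\<forall>i. \<exists>K. i < k \<longrightarrow> (K \<ge> 0 \<and> (\<forall>n. \<bar>Eerr a n i\<bar> \<le> K * real (n+1) ^ (i - 1)))"
      using less by blast
    then obtain Kf where Kf: "\<And>i. i < k \<Longrightarrow> Kf i \<ge> 0 \<and> (\<forall>n. \<bar>Eerr a n i\<bar> \<le> Kf i * real (n+1) ^ (i - 1))"
      by metis
    define M where "M = (\<Sum>i<k. real (k choose i) * ((Kf i + 2) * a ^ k))"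
    have M0: "M \<ge> 0" unfolding M_def using Kf a by (intro sum_nonneg) auto
    have Dd: "\<bar>Dd a l k\<bar> \<le> M * real (l+1) ^ (k - 2)" for l
    proof -
      have "\<bar>Dd a l k\<bar> \<le> (\<Sum>i<k. \<bar>real (k choose i) * (Amom a l i * ee a (k - i) - (real l * a) ^ i * a ^ (k - i))\<bar>)"
        unfolding Dd_def by (rule sum_abs)
      also have "\<dots> \<le> (\<Sum>i<k. real (k choose i) * ((Kf i + 2) * a ^ k * real (l+1) ^ (k - 2)))"
      proof (intro sum_mono)
        fix i assume "i \<in> {..<k}"
        then have i: "i < k" by simp
        show "\<bar>real (k choose i) * (Amom a l i * ee a (k - i) - (real l * a) ^ i * a ^ (k - i))\<bar>
            \<le> real (k choose i) * ((Kf i + 2) * a ^ k * real (l+1) ^ (k - 2))"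
          unfolding abs_mult using Dd_term_bound[OF a k2 i, of "Kf i" l] Kf[OF i]
          by (simp add: mult_left_mono)
      qed
      also have "\<dots> = M * real (l+1) ^ (k - 2)"
        unfolding M_def sum_distrib_right by (simp add: mult_ac)
      finally show ?thesis .
    qed
    have "\<bar>Eerr a n k\<bar> \<le> M * real (n+1) ^ (k - 1)" for n
    proof -
      have "\<bar>Eerr a n k\<bar> \<le> (\<Sum>l<n. \<bar>Dd a l k\<bar>)" unfolding Eerr_sum by (rule sum_abs)
      also have "\<dots> \<le> (\<Sum>l<n. M * real n ^ (k - 2))"
      proof (intro sum_mono)
        fix l assume "l \<in> {..<n}"
        then have "real (l+1) \<le> real n" by simp
        then have "M * real (l+1) ^ (k - 2) \<le> M * real n ^ (k - 2)"
          using M0 by (intro mult_left_mono power_mono) auto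
        then show "\<bar>Dd a l k\<bar> \<le> M * real n ^ (k - 2)" using Dd[of l] by linarith
      qed
      also have "\<dots> = M * real n ^ (k - 1)"
      proof -
        have "k - 1 = Suc (k - 2)" using k2 by simp
        then show ?thesis by (simp add: mult_ac)
      qed
      also have "\<dots> \<le> M * real (n+1) ^ (k - 1)"
        using M0 by (intro mult_left_mono power_mono) auto
      finally show ?thesis .
    qed
    then show ?thesis using M0 by blast
  qed
qed


definition mom :: "real \<Rightarrow> nat \<Rightarrow> nat \<Rightarrow> real" where
  "mom a n k = (\<Sum>j=0..n. Cj n j a * (1 - 2 * real j / real n) ^ k)"

lemma mom_eq: assumes "n > 0" shows "mom a n k = Amom a n k / real n ^ k"
proof -
  have "(1 - 2 * real j / real n) ^ k = (real n - 2 * real j) ^ k / real n ^ k" for j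
  proof -
    have "1 - 2 * real j / real n = (real n - 2 * real j) / real n" using assms by (simp add: diff_divide_distrib)
    then show ?thesis by (simp add: power_divide)
  qed
  then show ?thesis unfolding mom_def Amom_def by (simp add: sum_divide_distrib)
qed

lemma mom_bound: assumes a: "a \<ge> 1" shows "\<bar>mom a n k\<bar> \<le> a ^ k"
proof (cases "n = 0")
  case True
  then show ?thesis using a by (simp add: mom_def Cj_def one_le_power)
next
  case False
  then have n: "n > 0" by simp
  have "\<bar>mom a n k\<bar> = \<bar>Amom a n k\<bar> / real n ^ k" using mom_eq[OF n] by simp
  also have "\<dots> \<le> (real n * a) ^ k / real n ^ k"
    using Amom_bound[OF a] by (intro divide_right_mono) auto
  also have "\<dots> = a ^ k" using n by (simp add: power_mult_distrib)
  finally show ?thesis .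
qed

lemma mom_lim: assumes a: "a \<ge> 1" shows "(\<lambda>n. mom a n k) \<longlonglongrightarrow> a ^ k"
proof -
  obtain K where K: "K \<ge> 0" "\<And>n. \<bar>Eerr a n k\<bar> \<le> K * real (n+1) ^ (k - 1)"
    using Eerr_bound[OF a, of k] by blast
  have ev: "eventually (\<lambda>n. norm (mom a n k - a ^ k) \<le> K * 2 ^ k / real n) sequentially"
    using eventually_gt_at_top[of 0]
  proof eventually_elim
    case (elim n)
    have "mom a n k - a ^ k = Eerr a n k / real n ^ k"
      unfolding mom_eq[OF elim] Eerr_def using elim by (simp add: diff_divide_distrib power_mult_distrib)
    then have "norm (mom a n k - a ^ k) = \<bar>Eerr a n k\<bar> / real n ^ k" by simp
    also have "\<dots> \<le> K * 2 ^ k / real n"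
    proof (cases "k = 0")
      case True
      then show ?thesis using Eerr_k0 K by simp
    next
      case False
      have "\<bar>Eerr a n k\<bar> \<le> K * real (n+1) ^ (k - 1)" by (rule K)
      also have "\<dots> \<le> K * (2 * real n) ^ (k - 1)"
        using elim K by (intro mult_left_mono power_mono) auto
      finally have "\<bar>Eerr a n k\<bar> \<le> K * (2 * real n) ^ (k - 1)" .
      then have "\<bar>Eerr a n k\<bar> / real n ^ k \<le> K * (2 * real n) ^ (k - 1) / real n ^ k"
        by (intro divide_right_mono) auto
      also have "\<dots> = K * 2 ^ (k - 1) / real n"
      proof -
        have "k = Suc (k - 1)" using False by simp
        then have "real n ^ k = real n * real n ^ (k - 1)" by (metis power_Suc)
        then show ?thesis using elim by (simp add: power_mult_distrib)
      qed
      also have "\<dots> \<le> K * 2 ^ k / real n"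
        using K elim by (intro divide_right_mono mult_left_mono power_increasing) auto
      finally show ?thesis .
    qed
    finally show ?case .
  qed
  have "(\<lambda>n. mom a n k - a ^ k) \<longlonglongrightarrow> 0"
    by (rule Lim_null_comparison[OF ev]) (rule lim_const_over_n)
  then show ?thesis by (rule LIM_zero_cancel)
qed


definition GG :: "(complex \<Rightarrow> complex) \<Rightarrow> complex \<Rightarrow> complex \<Rightarrow> complex" where
  "GG f z w = f (z + \<i> * w / of_real (sqrt 2)) * exp (\<i> * z * w / of_real (sqrt 2) - w ^ 2 / 4)"

lemma weyl_GG: "weyl_op (- \<i> / of_real (sqrt 2) * of_real t) f z = GG f z (of_real t)"
proof -
  have s: "(of_real (sqrt 2) :: complex) ^ 2 = 2"
    by (metis of_real_numeral of_real_power real_sqrt_pow2 zero_le_numeral)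
  have c1: "z - (- \<i> / of_real (sqrt 2) * of_real t) = z + \<i> * of_real t / of_real (sqrt 2)"
    by simp
  have c2: "cnj (- \<i> / of_real (sqrt 2) * of_real t) = \<i> * of_real t / of_real (sqrt 2)"
    by simp
  have c3: "(cmod (- \<i> / of_real (sqrt 2) * of_real t))\<^sup>2 = t ^ 2 / 2"
    by (simp add: norm_mult norm_divide power_mult_distrib power_divide)
  have c4: "z * (\<i> * of_real t / of_real (sqrt 2)) - of_real (t ^ 2 / 2 / 2)
      = \<i> * z * of_real t / of_real (sqrt 2) - (of_real t) ^ 2 / 4"
    by simp
  show ?thesis unfolding weyl_op_def GG_def c1 c2 c3 c4 ..
qed

lemma GG_holo: assumes "f holomorphic_on UNIV" shows "GG f z holomorphic_on UNIV"
proof -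
  have "(f \<circ> (\<lambda>w. z + \<i> * w / of_real (sqrt 2))) holomorphic_on UNIV"
    by (rule holomorphic_on_compose[OF _ holomorphic_on_subset[OF assms]])
       (auto intro!: holomorphic_intros)
  then have "(\<lambda>w. f (z + \<i> * w / of_real (sqrt 2))) holomorphic_on UNIV"
    by (simp add: o_def)
  then show ?thesis unfolding GG_def by (intro holomorphic_intros) auto
qed


theorem proposition3p31:
  fixes a :: real and f :: "complex \<Rightarrow> complex" and z :: complex
  assumes "a > 1" and "f \<in> fock_space"
  shows "(\<lambda>n. \<Sum>j=0..n. of_real (Cj n j a) *
            weyl_op (- \<i> / of_real (sqrt 2) * of_real (1 - 2 * real j / real n)) f z)
         \<longlonglongrightarrow> weyl_op (- \<i> * of_real a / of_real (sqrt 2)) f z"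
proof -
  have a: "a \<ge> 1" using assms(1) by simp
  have holf: "f holomorphic_on UNIV" using assms(2) unfolding fock_space_def by simp
  define G where "G = GG f z"
  have holG: "G holomorphic_on UNIV" unfolding G_def by (rule GG_holo[OF holf])
  define c where "c k = (deriv ^^ k) G 0 / fact k" for k
  have hs: "(\<lambda>k. c k * w ^ k) sums G w" for w
  proof -
    have "(\<lambda>k. (deriv ^^ k) G 0 / fact k * (w - 0) ^ k) sums G w"
      by (rule holomorphic_power_series[where r = "norm w + 1"])
         (auto intro: holomorphic_on_subset[OF holG])
    then show ?thesis unfolding c_def by simp
  qed
  have summ: "summable (\<lambda>k. norm (c k) * a ^ k)"
  proof -
    have "summable (\<lambda>k. norm (c k * of_real a ^ k))"
      by (rule powser_insidea[OF sums_summable[OF hs[of "of_real (a+1)"]]]) (use a in auto)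
    then show ?thesis using a by (simp add: norm_mult norm_power)
  qed
  have lhs: "(\<Sum>j=0..n. of_real (Cj n j a) *
            weyl_op (- \<i> / of_real (sqrt 2) * of_real (1 - 2 * real j / real n)) f z)
        = (\<Sum>k. c k * of_real (mom a n k))" for n
  proof -
    have "(\<lambda>k. \<Sum>j=0..n. of_real (Cj n j a) * (c k * of_real (1 - 2 * real j / real n) ^ k))
        sums (\<Sum>j=0..n. of_real (Cj n j a) * G (of_real (1 - 2 * real j / real n)))"
      by (intro sums_sum sums_mult hs)
    moreover have "(\<Sum>j=0..n. of_real (Cj n j a) * (c k * of_real (1 - 2 * real j / real n) ^ k))
        = c k * of_real (mom a n k)" for k
      unfolding mom_def by (simp add: sum_distrib_left mult_ac)
    ultimately have "(\<lambda>k. c k * of_real (mom a n k))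
        sums (\<Sum>j=0..n. of_real (Cj n j a) * G (of_real (1 - 2 * real j / real n)))"
      by simp
    then show ?thesis unfolding G_def weyl_GG by (simp add: sums_iff)
  qed
  have rhs: "weyl_op (- \<i> * of_real a / of_real (sqrt 2)) f z = (\<Sum>k. c k * of_real a ^ k)"
  proof -
    have "- \<i> * of_real a / of_real (sqrt 2) = - \<i> / of_real (sqrt 2) * (of_real a :: complex)"
      by simp
    then show ?thesis using weyl_GG[of a f z] hs[of "of_real a"] unfolding G_def
      by (simp add: sums_iff)
  qed
  have T: "((\<lambda>n. \<Sum>k. c k * of_real (mom a n k)) \<longlongrightarrow> (\<Sum>k. c k * of_real a ^ k)) sequentially"
  proof -
    have "eventually (\<lambda>n. summable (\<lambda>k. norm (c k * of_real (mom a n k)))) sequentially \<and>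
          summable (\<lambda>k. norm (c k * of_real a ^ k)) \<and>
          ((\<lambda>n. \<Sum>k. c k * of_real (mom a n k)) \<longlongrightarrow> (\<Sum>k. c k * of_real a ^ k)) sequentially"
    proof (rule tannerys_theorem[where M = "\<lambda>k. norm (c k) * a ^ k"])
      show "((\<lambda>n. c k * of_real (mom a n k)) \<longlongrightarrow> c k * of_real a ^ k) sequentially" for k
      proof -
        have "((\<lambda>n. of_real (mom a n k) :: complex) \<longlongrightarrow> of_real (a ^ k)) sequentially"
          by (rule tendsto_of_real[OF mom_lim[OF a]])
        then show ?thesis by (auto intro!: tendsto_mult_left)
      qed
      show "eventually (\<lambda>(k, n). norm (c k * of_real (mom a n k)) \<le> norm (c k) * a ^ k)
              (at_top \<times>\<^sub>F sequentially)"
        using mom_bound[OF a]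
        by (intro always_eventually) (auto simp: norm_mult intro!: mult_left_mono)
    qed (use summ in auto)
    then show ?thesis by blast
  qed
  show ?thesis unfolding lhs rhs by (rule T)
qed

end
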